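(* For all $v,w\in\overline{C}$ we have $T(v)=T(w)$.
   Context: All graphs are simple. $\mathcal{G}^*$ denotes the class of graphs in which any two distinct odd cycles share at most one edge. Standing setting: $G\in\mathcal{G}^*$ is $2$-connected, and $C$ is a longest odd cycle of $G$ with $|C|\ge 5$. We also write $C$ for its vertex set. Let $\overline{C}=V(G)\setminus C$, assumed nonempty. For $v\in\overline{C}$ and $w\in C$, $v$ touches $w$ if there is a $v,w$-path meeting $C$ only at $w$. $T(v)=\{w\in C: v \text{ touches } w\}$. *)

theory Defs
  imports Main
begin

definition simple_graph :: "'a set \<Rightarrow> 'a set set \<Rightarrow> bool" where
  "simple_graph V E \<longleftrightarrow> finite V \<and> (\<forall>e\<in>E. e \<subseteq> V \<and> card e = 2)"

definition is_path :: "'a set \<Rightarrow> 'a set set \<Rightarrow> 'a list \<Rightarrow> bool" where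
  "is_path V E P \<longleftrightarrow> P \<noteq> [] \<and> distinct P \<and> set P \<subseteq> V \<and>
     (\<forall>i. Suc i < length P \<longrightarrow> {P ! i, P ! Suc i} \<in> E)"

definition is_cycle :: "'a set \<Rightarrow> 'a set set \<Rightarrow> 'a list \<Rightarrow> bool" where
  "is_cycle V E C \<longleftrightarrow> 3 \<le> length C \<and> distinct C \<and> set C \<subseteq> V \<and>
     (\<forall>i < length C. {C ! i, C ! ((Suc i) mod length C)} \<in> E)"

definition cycle_edges :: "'a list \<Rightarrow> 'a set set" where
  "cycle_edges C = {{C ! i, C ! ((Suc i) mod length C)} | i. i < length C}"

definition is_odd_cycle :: "'a set \<Rightarrow> 'a set set \<Rightarrow> 'a list \<Rightarrow> bool" where
  "is_odd_cycle V E C \<longleftrightarrow> is_cycle V E C \<and> odd (length C)"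

definition in_Gstar :: "'a set \<Rightarrow> 'a set set \<Rightarrow> bool" where
  "in_Gstar V E \<longleftrightarrow> simple_graph V E \<and>
     (\<forall>C D. is_odd_cycle V E C \<longrightarrow> is_odd_cycle V E D \<longrightarrow>
        cycle_edges C \<noteq> cycle_edges D \<longrightarrow> card (cycle_edges C \<inter> cycle_edges D) \<le> 1)"

definition connected_graph :: "'a set \<Rightarrow> 'a set set \<Rightarrow> bool" where
  "connected_graph V E \<longleftrightarrow> V \<noteq> {} \<and>
     (\<forall>u\<in>V. \<forall>v\<in>V. \<exists>P. is_path V E P \<and> hd P = u \<and> last P = v)"

definition two_connected :: "'a set \<Rightarrow> 'a set set \<Rightarrow> bool" where
  "two_connected V E \<longleftrightarrow> 3 \<le> card V \<and> connected_graph V E \<and>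
     (\<forall>x\<in>V. connected_graph (V - {x}) {e\<in>E. x \<notin> e})"

definition longest_odd_cycle :: "'a set \<Rightarrow> 'a set set \<Rightarrow> 'a list \<Rightarrow> bool" where
  "longest_odd_cycle V E C \<longleftrightarrow> is_odd_cycle V E C \<and>
     (\<forall>D. is_odd_cycle V E D \<longrightarrow> length D \<le> length C)"

definition touches :: "'a set \<Rightarrow> 'a set set \<Rightarrow> 'a list \<Rightarrow> 'a \<Rightarrow> 'a \<Rightarrow> bool" where
  "touches V E C v w \<longleftrightarrow> w \<in> set C \<and>
     (\<exists>P. is_path V E P \<and> hd P = v \<and> last P = w \<and> set P \<inter> set C = {w})"

definition touch_set :: "'a set \<Rightarrow> 'a set set \<Rightarrow> 'a list \<Rightarrow> 'a \<Rightarrow> 'a set" where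
  "touch_set V E C v = {w \<in> set C. touches V E C v w}"

end

theory Submission
  imports Defs
begin



fun walk :: "'a set set \<Rightarrow> 'a list \<Rightarrow> bool" where
  "walk F [] = False"
| "walk F [x] = True"
| "walk F (x # y # xs) = ({x, y} \<in> F \<and> walk F (y # xs))"

lemma walk_nth: "walk F xs \<longleftrightarrow> xs \<noteq> [] \<and> (\<forall>i. Suc i < length xs \<longrightarrow> {xs ! i, xs ! Suc i} \<in> F)"
proof (induction F xs rule: walk.induct)
  case (3 F x y xs)
  show ?case
  proof
    assume "walk F (x # y # xs)"
    then show "x # y # xs \<noteq> [] \<and> (\<forall>i. Suc i < length (x # y # xs) \<longrightarrow> {(x # y # xs) ! i, (x # y # xs) ! Suc i} \<in> F)"
      using 3 by (auto simp: nth_Cons split: nat.splits)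
  next
    assume h: "x # y # xs \<noteq> [] \<and> (\<forall>i. Suc i < length (x # y # xs) \<longrightarrow> {(x # y # xs) ! i, (x # y # xs) ! Suc i} \<in> F)"
    have "{x,y} \<in> F" using h[THEN conjunct2, rule_format, of 0] by simp
    moreover have "\<forall>i. Suc i < length (y # xs) \<longrightarrow> {(y # xs) ! i, (y # xs) ! Suc i} \<in> F"
      using h[THEN conjunct2] by (metis Suc_less_eq length_Cons nth_Cons_Suc)
    ultimately show "walk F (x # y # xs)" using 3 by simp
  qed
qed auto

lemma is_path_walk: "is_path V E P \<longleftrightarrow> walk E P \<and> distinct P \<and> set P \<subseteq> V"
  unfolding is_path_def walk_nth by auto

lemma walk_split: "walk F (xs @ x # ys) \<Longrightarrow> walk F (xs @ [x]) \<and> walk F (x # ys)"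
proof (induction xs)
  case (Cons a xs)
  then show ?case by (cases xs) auto
qed simp

lemma walk_app: "xs \<noteq> [] \<Longrightarrow> ys \<noteq> [] \<Longrightarrow> walk F (xs @ ys) \<longleftrightarrow> walk F xs \<and> walk F ys \<and> {last xs, hd ys} \<in> F"
proof (induction xs)
  case (Cons a xs)
  then show ?case by (cases xs; cases ys) auto
qed simp

lemma walk_join: "walk F (xs @ [x]) \<Longrightarrow> walk F (x # ys) \<Longrightarrow> walk F (xs @ x # ys)"
  by (cases "xs = []") (auto simp: walk_app[of xs "x # ys"] walk_app[of xs "[x]"])

lemma walk_rev: "walk F xs \<Longrightarrow> walk F (rev xs)"
proof (induction xs rule: walk.induct[of _ F])
  case (3 F x y xs)
  then show ?case using walk_app[of "rev xs @ [y]" "[x]" F] by (auto simp: insert_commute)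
qed auto

lemma walk_shorten:
  "walk F xs \<Longrightarrow> \<exists>ys. walk F ys \<and> distinct ys \<and> hd ys = hd xs \<and> last ys = last xs \<and> set ys \<subseteq> set xs"
proof (induction "length xs" arbitrary: xs rule: less_induct)
  case less
  show ?case
  proof (cases "distinct xs")
    case True then show ?thesis using less by blast
  next
    case False
    then obtain as x bs cs where xs: "xs = as @ [x] @ bs @ [x] @ cs" using not_distinct_decomp by blast
    have w1: "walk F (as @ [x])" using walk_split[of F as x] less(2) xs by auto
    have "walk F (x # bs @ x # cs)" using walk_split[of F as x] less(2) xs by auto
    then have w2: "walk F (x # cs)" using walk_split[of F "x # bs" x cs] by auto
    have "walk F (as @ x # cs)" using walk_join[OF w1 w2] .
    moreover have "length (as @ x # cs) < length xs" using xs by simp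
    ultimately obtain ys where Y: "walk F ys \<and> distinct ys \<and> hd ys = hd (as @ x # cs) \<and> last ys = last (as @ x # cs) \<and> set ys \<subseteq> set (as @ x # cs)"
      using less(1) by blast
    have "hd (as @ x # cs) = hd xs" "last (as @ x # cs) = last xs" "set (as @ x # cs) \<subseteq> set xs"
      using xs by (cases as; cases cs; auto)+
    then show ?thesis using Y by (metis subset_trans)
  qed
qed





lemma cycle_intro: "walk E L \<Longrightarrow> {last L, hd L} \<in> E \<Longrightarrow> distinct L \<Longrightarrow> 3 \<le> length L \<Longrightarrow> set L \<subseteq> V
   \<Longrightarrow> is_cycle V E L"
  unfolding is_cycle_def
proof (intro conjI allI impI; assumption?)
  fix i assume w: "walk E L" and l: "{last L, hd L} \<in> E" and n: "3 \<le> length L" and i: "i < length L"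
  show "{L ! i, L ! (Suc i mod length L)} \<in> E"
  proof (cases "Suc i < length L")
    case True then show ?thesis using w by (simp add: walk_nth)
  next
    case False
    then have "Suc i = length L" using i by simp
    then have "i = length L - 1" by simp
    moreover have "L \<noteq> []" using n by auto
    ultimately have "L ! i = last L" "L ! (Suc i mod length L) = hd L" using \<open>Suc i = length L\<close>
      by (auto simp: last_conv_nth hd_conv_nth)
    then show ?thesis using l by simp
  qed
qed

definition arc :: "'a list \<Rightarrow> nat \<Rightarrow> nat \<Rightarrow> 'a list" where
  "arc C s m = map (\<lambda>i. C ! ((s + i) mod length C)) [0..<Suc m]"

lemma arc_len[simp]: "length (arc C s m) = Suc m" by (simp add: arc_def)
lemma arc_nth: "i \<le> m \<Longrightarrow> arc C s m ! i = C ! ((s + i) mod length C)"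
  by (simp add: arc_def nth_map_upt del: upt_Suc)
lemma arc_ne[simp]: "arc C s m \<noteq> []" by (simp add: arc_def del: upt_Suc)
lemma arc_hd: "hd (arc C s m) = C ! (s mod length C)"
  by (simp add: hd_conv_nth arc_nth)
lemma arc_last: "last (arc C s m) = C ! ((s + m) mod length C)"
  by (simp add: last_conv_nth arc_nth)
lemma arc_set: "C \<noteq> [] \<Longrightarrow> set (arc C s m) \<subseteq> set C"
  by (auto simp: arc_def)

lemma cyc_edge: "is_cycle V E C \<Longrightarrow> {C ! (k mod length C), C ! (Suc k mod length C)} \<in> E"
proof -
  assume c: "is_cycle V E C"
  then have n: "length C > 0" unfolding is_cycle_def by linarith
  have "{C ! (k mod length C), C ! (Suc (k mod length C) mod length C)} \<in> E"
    using c n unfolding is_cycle_def by simp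
  then show ?thesis by (simp add: mod_Suc_eq)
qed

lemma arc_walk: "is_cycle V E C \<Longrightarrow> walk E (arc C s m)"
  unfolding walk_nth
proof (intro conjI allI impI)
  fix i assume c: "is_cycle V E C" and i: "Suc i < length (arc C s m)"
  show "{arc C s m ! i, arc C s m ! Suc i} \<in> E"
    using i cyc_edge[OF c, of "s+i"] by (simp add: arc_nth)
qed (simp add: arc_def)

lemma arc_distinct: "is_cycle V E C \<Longrightarrow> m < length C \<Longrightarrow> distinct (arc C s m)"
proof -
  assume c: "is_cycle V E C" and m: "m < length C"
  have d: "distinct C" and n: "length C > 0" using c by (auto simp: is_cycle_def)
  show ?thesis
    unfolding distinct_conv_nth
  proof (intro allI impI)
    fix i j assume "i < length (arc C s m)" "j < length (arc C s m)" "i \<noteq> j"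
    then have ij: "i \<le> m" "j \<le> m" "i \<noteq> j" by auto
    have "(s + i) mod length C \<noteq> (s + j) mod length C"
    proof
      assume "(s + i) mod length C = (s + j) mod length C"
      moreover have "\<And>a b. a < b \<Longrightarrow> b \<le> m \<Longrightarrow> (s + a) mod length C \<noteq> (s + b) mod length C"
      proof
        fix a b assume ab: "a < b" "b \<le> m" "(s + a) mod length C = (s + b) mod length C"
        then have "length C dvd (s + b) - (s + a)" using mod_eq_dvd_iff_nat[of "s+a" "s+b" "length C"] by (simp add: eq_commute)
        then have "length C dvd b - a" by simp
        moreover have "0 < b - a" "b - a < length C" using ab m by auto
        ultimately show False using nat_dvd_not_less by blast
      qed
      ultimately show False using ij by (metis nat_neq_iff)
    qed
    then show "arc C s m ! i \<noteq> arc C s m ! j"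
      using ij d n by (simp add: arc_nth nth_eq_iff_index_eq)
  qed
qed

lemma cedge_in: "Suc i < length L \<Longrightarrow> {L ! i, L ! Suc i} \<in> cycle_edges L"
  unfolding cycle_edges_def by (rule CollectI, rule exI[of _ i]) simp

lemma cedge_C: "i < length L \<Longrightarrow> {L ! i, L ! (Suc i mod length L)} \<in> cycle_edges L"
  unfolding cycle_edges_def by blast

lemma cedges_sub: "e \<in> cycle_edges L \<Longrightarrow> e \<subseteq> set L"
  unfolding cycle_edges_def by auto (metis nth_mem mod_less_divisor gr_implies_not0 neq0_conv)

lemma cedges_finite: "finite (cycle_edges L)"
proof -
  have "cycle_edges L = (\<lambda>i. {L ! i, L ! (Suc i mod length L)}) ` {..<length L}"
    unfolding cycle_edges_def by auto
  then show ?thesis by simp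
qed


locale setting =
  fixes V :: "'a set" and E :: "'a set set" and C :: "'a list"
  assumes gstar: "in_Gstar V E" and longest: "longest_odd_cycle V E C" and n5: "5 \<le> length C"
begin

lemma Ccyc: "is_cycle V E C" using longest by (simp add: longest_odd_cycle_def is_odd_cycle_def)
lemma Cdist: "distinct C" using Ccyc by (simp add: is_cycle_def)
lemma CV: "set C \<subseteq> V" using Ccyc by (simp add: is_cycle_def)
lemma Codd: "odd (length C)" using longest by (simp add: longest_odd_cycle_def is_odd_cycle_def)

lemma core:
  assumes i: "i < length C" and d: "2 \<le> d" "d < length C" and U: "U \<noteq> []" "set U \<inter> set C = {}"
    "distinct U" "set U \<subseteq> V" "walk E U" "{C ! ((i + d) mod length C), hd U} \<in> E" "{last U, C ! i} \<in> E"
  shows "even (Suc d + length U)"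
proof (rule ccontr)
  assume odd: "odd (Suc d + length U)"
  define L where "L = arc C i d @ U"
  have n0: "length C > 0" using i by (cases C) auto
  have wL: "walk E L" unfolding L_def using walk_app[of "arc C i d" U E] arc_walk[OF Ccyc] U
    by (simp add: arc_last)
  have dL: "distinct L" unfolding L_def using arc_distinct[OF Ccyc d(2), of i] U arc_set[of C i d] n0 by auto
  have sL: "set L \<subseteq> V" unfolding L_def using arc_set[of C i d] n0 CV U by auto
  have cl: "{last L, hd L} \<in> E" unfolding L_def using U i by (simp add: arc_hd insert_commute)
  have lenL: "length L = Suc d + length U" unfolding L_def by simp
  have cyc: "is_odd_cycle V E L" unfolding is_odd_cycle_def
    using cycle_intro[OF wL cl dL _ sL] lenL odd d by simp
  have L0: "L ! 0 = C ! i" "L ! 1 = C ! (Suc i mod length C)" "L ! 2 = C ! (Suc (Suc i) mod length C)"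
    unfolding L_def using d i by (simp_all add: nth_append arc_nth)
  have e1: "{L ! 0, L ! 1} \<in> cycle_edges L \<inter> cycle_edges C"
    using cedge_in[of 0 L] cedge_C[of i C] lenL d L0 i by simp
  have e2: "{L ! 1, L ! 2} \<in> cycle_edges L \<inter> cycle_edges C"
    using cedge_in[of 1 L] cedge_C[of "Suc i mod length C" C] lenL d L0 i n0 by (simp add: mod_Suc_eq numeral_2_eq_2)
  have ne: "L ! 0 \<noteq> L ! 2" "L ! 0 \<noteq> L ! 1" using dL lenL d by (simp_all add: nth_eq_iff_index_eq)
  then have "{L ! 0, L ! 1} \<noteq> {L ! 1, L ! 2}" by (metis doubleton_eq_iff)
  then have "card {{L ! 0, L ! 1}, {L ! 1, L ! 2}} = 2" by simp
  moreover have "card {{L ! 0, L ! 1}, {L ! 1, L ! 2}} \<le> card (cycle_edges L \<inter> cycle_edges C)"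
    using e1 e2 cedges_finite[of L] by (intro card_mono) auto
  ultimately have c2: "card (cycle_edges L \<inter> cycle_edges C) \<ge> 2" by linarith
  have "{L ! d, L ! Suc d} \<in> cycle_edges L" using cedge_in[of d L] lenL U by simp
  moreover have "L ! Suc d = hd U" unfolding L_def using U by (simp add: nth_append hd_conv_nth)
  moreover have "hd U \<notin> set C" using U by (simp add: disjoint_iff)
  ultimately have "cycle_edges L \<noteq> cycle_edges C" using cedges_sub[of "{L ! d, L ! Suc d}" C] by auto
  then have "card (cycle_edges L \<inter> cycle_edges C) \<le> 1"
    using gstar cyc longest unfolding in_Gstar_def longest_odd_cycle_def by blast
  then show False using c2 by simp
qed


lemma ear:
  assumes i: "i < length C" and j: "j < length C" and ij: "i \<noteq> j" and U: "U \<noteq> []"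
    and P: "is_path V E (C ! i # U @ [C ! j])" and UC: "set U \<inter> set C = {}"
  shows "odd (length U) \<and> (j = Suc i mod length C \<or> i = Suc j mod length C)"
proof -
  let ?n = "length C"
  have w: "walk E (C ! i # U @ [C ! j])" and dP: "distinct (C ! i # U @ [C ! j])"
    and sP: "set (C ! i # U @ [C ! j]) \<subseteq> V" using P by (auto simp: is_path_walk)
  have w1: "walk E (U @ [C ! j])" "{C ! i, hd U} \<in> E"
    using walk_app[of "[C ! i]" "U @ [C ! j]" E] w U by auto
  have w2: "walk E U" "{last U, C ! j} \<in> E" using walk_app[of U "[C ! j]" E] w1 U by auto
  have dU: "distinct U" and sU: "set U \<subseteq> V" using dP sP by auto
  obtain d where d: "1 \<le> d" "d < ?n" "(i + d) mod ?n = j" "(j + (?n - d)) mod ?n = i"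
  proof (cases "i < j")
    case True
    show ?thesis
    proof (rule that[of "j - i"])
      have "j + (?n - (j - i)) = ?n + i" using True j by simp
      then show "(j + (?n - (j - i))) mod ?n = i" using i by simp
    qed (use True j in auto)
  next
    case False
    then have ji: "j < i" using ij by simp
    show ?thesis
    proof (rule that[of "?n + j - i"])
      have "i + (?n + j - i) = ?n + j" using i by simp
      then show "(i + (?n + j - i)) mod ?n = j" using j by simp
      have "j + (?n - (?n + j - i)) = i" using ji i by simp
      then show "(j + (?n - (?n + j - i))) mod ?n = i" using i by simp
    qed (use ji i in auto)
  qed
  have revU: "rev U \<noteq> []" "set (rev U) \<inter> set C = {}" "distinct (rev U)" "set (rev U) \<subseteq> V" "walk E (rev U)"
    "hd (rev U) = last U" "last (rev U) = hd U"
    using U UC dU sU walk_rev[OF w2(1)] by (auto simp: hd_rev last_rev)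
  have A: "2 \<le> d \<Longrightarrow> even (Suc d + length U)"
    using core[OF i _ d(2) revU(1-5)] revU(6,7) d(3) w1(2) w2(2) by (simp add: insert_commute)
  have B: "even (Suc (?n - d) + length U)" if h: "2 \<le> ?n - d"
  proof -
    have e: "{C ! ((j + (?n - d)) mod ?n), hd U} \<in> E" using d(4) w1(2) by (simp add: insert_commute)
    have "?n - d < ?n" using d(1,2) by simp
    from core[OF j h this U UC dU sU w2(1) e w2(2)] show ?thesis .
  qed
  have no: "odd ?n" using Codd .
  show ?thesis
  proof (cases "d = 1")
    case True
    then have "2 \<le> ?n - d" using n5 by simp
    then have "even (Suc (?n - d) + length U)" by (rule B)
    moreover have "Suc (?n - d) = ?n" using True n5 by simp
    ultimately have "even (?n + length U)" by simp
    then have "odd (length U)" using no by simp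
    then show ?thesis using d True by simp
  next
    case False
    then have d2: "2 \<le> d" using d by simp
    show ?thesis
    proof (cases "?n - d = 1")
      case True
      then have "d = ?n - 1" by simp
      have "even (Suc d + length U)" using A d2 by simp
      moreover have "Suc d = ?n" using True d by simp
      ultimately have "even (?n + length U)" by simp
      then have "odd (length U)" using no by simp
      moreover have "(j + 1) mod ?n = i" using d True by simp
      ultimately show ?thesis by simp
    next
      case False
      then have "2 \<le> ?n - d" using d by simp
      then have "even (Suc (?n - d) + length U)" "even (Suc d + length U)" using A B d2 by auto
      then have "even (Suc (?n - d) + Suc d)" by simp
      moreover have "Suc (?n - d) + Suc d = ?n + 2" using d by simp
      ultimately show ?thesis using no by simp
    qed
  qed
qed

end




lemma walk_mono: "walk F xs \<Longrightarrow> F \<subseteq> G \<Longrightarrow> walk G xs"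
  by (auto simp: walk_nth)

lemma walk_take: "walk F xs \<Longrightarrow> 0 < m \<Longrightarrow> walk F (take m xs)"
  by (auto simp: walk_nth)

lemma walk_drop: "walk F xs \<Longrightarrow> m < length xs \<Longrightarrow> walk F (drop m xs)"
  by (auto simp: walk_nth)

lemma path_rev: "is_path V E P \<Longrightarrow> is_path V E (rev P)"
  by (auto simp: is_path_walk walk_rev)

context setting begin

definition reach :: "'a \<Rightarrow> 'a \<Rightarrow> bool" where
  "reach v z \<longleftrightarrow> (\<exists>W. walk E W \<and> hd W = v \<and> last W = z \<and> set W \<subseteq> V - set C)"

lemma touch_walk:
  assumes "walk E W" "hd W = v" "last W = x" "x \<in> set C" "set W \<subseteq> V" "set W \<inter> set C \<subseteq> {x}"
  shows "touches V E C v x"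
proof -
  obtain P where P: "walk E P" "distinct P" "hd P = hd W" "last P = last W" "set P \<subseteq> set W"
    using walk_shorten[OF assms(1)] by blast
  have "P \<noteq> []" using P(1) by (cases P) auto
  then have "last P \<in> set P" by simp
  then have "set P \<inter> set C = {x}" using P assms by auto
  moreover have "is_path V E P" using P assms by (auto simp: is_path_walk)
  ultimately show ?thesis unfolding touches_def using P assms by auto
qed

lemma first_hit:
  "walk E P \<Longrightarrow> last P \<in> set C \<Longrightarrow> \<exists>Q. walk E Q \<and> hd Q = hd P \<and> last Q \<in> set C \<and> set Q \<subseteq> set P
      \<and> set Q \<inter> set C = {last Q}"
proof (induction P)
  case (Cons x xs)
  show ?case
  proof (cases "x \<in> set C \<or> xs = []")
    case True
    then show ?thesis using Cons.prems by (intro exI[of _ "[x]"]) auto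
  next
    case False
    then have xs: "xs \<noteq> []" "x \<notin> set C" by auto
    have wx: "walk E xs" "{x, hd xs} \<in> E" using Cons.prems(1) xs walk_app[of "[x]" xs E] by auto
    obtain Q where Q: "walk E Q" "hd Q = hd xs" "last Q \<in> set C" "set Q \<subseteq> set xs"
      "set Q \<inter> set C = {last Q}" using Cons.IH wx Cons.prems xs by auto
    have "Q \<noteq> []" using Q(1) by (cases Q) auto
    then have "walk E (x # Q)" using Q wx walk_app[of "[x]" Q E] by simp
    then show ?thesis using Q xs \<open>Q \<noteq> []\<close> by (intro exI[of _ "x # Q"]) auto
  qed
qed simp

lemma touches_in: "touches V E C v x \<Longrightarrow> x \<in> set C" by (simp add: touches_def)

lemma T_two:
  assumes tc: "two_connected V E" and v: "v \<in> V" "v \<notin> set C"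
  shows "\<exists>x y. x \<noteq> y \<and> touches V E C v x \<and> touches V E C v y"
proof -
  have l: "0 < length C" "1 < length C" using n5 by auto
  have c0: "C ! 0 \<in> set C" "C ! 0 \<in> V" "C ! 1 \<in> set C" "C ! 0 \<noteq> C ! 1" using l CV Cdist nth_mem[OF l(1)] nth_mem[OF l(2)]
    by (auto simp: nth_eq_iff_index_eq)
  have cg: "connected_graph V E" using tc by (simp add: two_connected_def)
  obtain P where P: "is_path V E P" "hd P = v" "last P = C ! 0" using cg v c0 unfolding connected_graph_def by blast
  obtain Q where Q: "walk E Q" "hd Q = v" "last Q \<in> set C" "set Q \<subseteq> set P" "set Q \<inter> set C = {last Q}"
    using first_hit[of P] P c0 by (auto simp: is_path_walk)
  define x where "x = last Q"
  have tx: "touches V E C v x" unfolding x_def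
    using touch_walk[OF Q(1,2) refl Q(3)] Q P by (auto simp: is_path_walk)
  obtain y0 where y0: "y0 \<in> set C" "y0 \<noteq> x" using c0 by metis
  have cg2: "connected_graph (V - {x}) {e\<in>E. x \<notin> e}" using tc v Q CV unfolding two_connected_def x_def by auto
  obtain P' where P': "is_path (V - {x}) {e\<in>E. x \<notin> e} P'" "hd P' = v" "last P' = y0"
  proof -
    have "v \<in> V - {x}" "y0 \<in> V - {x}" using v y0 CV Q unfolding x_def by auto
    then show ?thesis using cg2 that unfolding connected_graph_def by blast
  qed
  have wP': "walk E P'" using P' walk_mono[of "{e\<in>E. x \<notin> e}" P' E] by (auto simp: is_path_walk)
  obtain Q' where Q': "walk E Q'" "hd Q' = v" "last Q' \<in> set C" "set Q' \<subseteq> set P'" "set Q' \<inter> set C = {last Q'}"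
    using first_hit[OF wP'] P' y0 by auto
  have "Q' \<noteq> []" using Q'(1) by (cases Q') auto
  then have "last Q' \<in> set Q'" by simp
  then have ne: "last Q' \<noteq> x" using Q' P' by (auto simp: is_path_walk)
  have ty: "touches V E C v (last Q')"
    using touch_walk[OF Q'(1,2) refl Q'(3)] Q' P' by (auto simp: is_path_walk)
  show ?thesis using tx ty ne by blast
qed

end




context setting begin

lemma reach_sym: "reach v z \<Longrightarrow> reach z v"
  unfolding reach_def
proof (elim exE conjE)
  fix W assume "walk E W" "hd W = v" "last W = z" "set W \<subseteq> V - set C"
  moreover have "W \<noteq> []" using \<open>walk E W\<close> by (cases W) auto
  ultimately show "\<exists>W. walk E W \<and> hd W = z \<and> last W = v \<and> set W \<subseteq> V - set C"
    by (intro exI[of _ "rev W"]) (auto simp: walk_rev hd_rev last_rev)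
qed

lemma reach_touch: "reach v z \<Longrightarrow> touches V E C z c \<Longrightarrow> touches V E C v c"
proof -
  assume r: "reach v z" and t: "touches V E C z c"
  obtain W where W: "walk E W" "hd W = v" "last W = z" "set W \<subseteq> V - set C" using r reach_def by auto
  obtain Q where Q: "is_path V E Q" "hd Q = z" "last Q = c" "set Q \<inter> set C = {c}" and c: "c \<in> set C"
    using t unfolding touches_def by blast
  have Wn: "W \<noteq> []" using W(1) by (cases W) auto
  have Qn: "Q \<noteq> []" using Q(1) by (auto simp: is_path_def)
  have W': "butlast W @ [z] = W" using Wn W(3) by (metis append_butlast_last_id)
  have Q': "z # tl Q = Q" using Qn Q(2) by (cases Q) auto
  have wj: "walk E (butlast W @ z # tl Q)" using walk_join[of E "butlast W" z "tl Q"] W(1) Q(1) W' Q'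
    by (auto simp: is_path_walk)
  have "hd (butlast W @ z # tl Q) = hd (butlast W @ [z])" by (cases "butlast W") auto
  then have h: "hd (butlast W @ z # tl Q) = v" using W(2) W' by simp
  have l: "last (butlast W @ z # tl Q) = c" using Q' Q(3) Qn by simp
  have "set (z # tl Q) \<subseteq> V" using Q(1) Q' by (simp add: is_path_def)
  then have s1: "set (butlast W @ z # tl Q) \<subseteq> V" using W(4) by (auto dest: in_set_butlastD)
  have s2: "set (butlast W @ z # tl Q) \<inter> set C \<subseteq> {c}" using W(4) Q(4) Q'
  proof -
    have "set (butlast W) \<inter> set C = {}" using W(4) by (auto dest: in_set_butlastD)
    moreover have "set (z # tl Q) \<inter> set C \<subseteq> {c}" using Q(4) Q' by simp
    ultimately show ?thesis by auto
  qed
  show ?thesis using touch_walk[OF wj h l c s1 s2] .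
qed

lemma reach_T: "reach v z \<Longrightarrow> touch_set V E C v = touch_set V E C z"
  unfolding touch_set_def using reach_touch reach_sym by blast

lemma reach_on_path:
  assumes P: "is_path V E P" "hd P = v" "last P = x" "set P \<inter> set C = {x}"
    and z: "z \<in> set P" "z \<notin> set C"
  shows "reach v z"
proof -
  obtain ps qs where sp: "P = ps @ z # qs" using z(1) split_list by metis
  have w: "walk E (ps @ [z])" using walk_split[of E ps z qs] P(1) sp by (auto simp: is_path_walk)
  have d: "distinct (ps @ z # qs)" using P(1) sp by (simp add: is_path_def)
  have x: "x \<in> set C" using P(4) by auto
  have "x \<notin> set ps"
  proof
    assume xp: "x \<in> set ps"
    show False
    proof (cases "qs = []")
      case True
      then have "x = z" using P(3) sp by simp
      then show False using x z by simp
    next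
      case False
      then have "x \<in> set qs" using P(3) sp by (metis last_ConsR last_appendR last_in_set list.simps(3))
      then show False using xp d by auto
    qed
  qed
  then have "set (ps @ [z]) \<subseteq> V - set C" using P(1,4) sp z by (auto simp: is_path_def)
  moreover have "hd (ps @ [z]) = v" using P(2) sp by (cases ps) auto
  ultimately show ?thesis unfolding reach_def using w by (intro exI[of _ "ps @ [z]"]) auto
qed

lemma path_walkF:
  assumes "is_path V E P" "set P \<inter> set C \<subseteq> {x}"
  shows "walk {e \<in> E. \<not> e \<subseteq> set C} P"
  unfolding walk_nth
proof (intro conjI allI impI)
  show "P \<noteq> []" using assms by (simp add: is_path_def)
  fix i assume i: "Suc i < length P"
  have e: "{P ! i, P ! Suc i} \<in> E" using assms(1) i by (simp add: is_path_def)
  have "P ! i \<noteq> P ! Suc i" using assms(1) i by (simp add: is_path_def nth_eq_iff_index_eq)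
  moreover have "P ! i \<in> set P" "P ! Suc i \<in> set P" using i by auto
  ultimately have "\<not> {P ! i, P ! Suc i} \<subseteq> set C" using assms(2) by auto
  then show "{P ! i, P ! Suc i} \<in> {e \<in> E. \<not> e \<subseteq> set C}" using e by simp
qed

lemma T_ear:
  assumes v: "v \<in> V" "v \<notin> set C" and tx: "touches V E C v x" and ty: "touches V E C v y" and xy: "x \<noteq> y"
  shows "\<exists>U. U \<noteq> [] \<and> is_path V E (x # U @ [y]) \<and> set U \<inter> set C = {} \<and> (\<forall>z\<in>set U. reach v z)"
proof -
  let ?F = "{e \<in> E. \<not> e \<subseteq> set C}"
  obtain P1 where P1: "is_path V E P1" "hd P1 = v" "last P1 = x" "set P1 \<inter> set C = {x}" and xC: "x \<in> set C"
    using tx unfolding touches_def by blast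
  obtain P2 where P2: "is_path V E P2" "hd P2 = v" "last P2 = y" "set P2 \<inter> set C = {y}" and yC: "y \<in> set C"
    using ty unfolding touches_def by blast
  obtain R1 where R1: "P1 = v # R1" using P1(1,2) by (cases P1) (auto simp: is_path_def)
  obtain R2 where R2: "P2 = v # R2" using P2(1,2) by (cases P2) (auto simp: is_path_def)
  have R1n: "R1 \<noteq> []" using R1 P1(3) xC v by auto
  have R2n: "R2 \<noteq> []" using R2 P2(3) yC v by auto
  have wF1: "walk ?F P1" using path_walkF[OF P1(1)] P1(4) by simp
  have wF2: "walk ?F P2" using path_walkF[OF P2(1)] P2(4) by simp
  define W where "W = rev R1 @ v # R2"
  have wW: "walk ?F W" unfolding W_def
    using walk_join[of ?F "rev R1" v R2] walk_rev[OF wF1] wF2 R1 R2 by simp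
  have hW: "hd W = x" unfolding W_def using R1n P1(3) R1 by (simp add: hd_rev)
  have lW: "last W = y" unfolding W_def using R2n P2(3) R2 by simp
  have sW: "set W = set P1 \<union> set P2" unfolding W_def using R1 R2 by auto
  obtain P where P: "walk ?F P" "distinct P" "hd P = x" "last P = y" "set P \<subseteq> set W"
    using walk_shorten[OF wW] hW lW by auto
  have Pn: "P \<noteq> []" using P(1) by (cases P) auto
  obtain a rest where ar: "P = a # rest" using Pn by (cases P) auto
  have a: "a = x" using ar P(3) by simp
  have restn: "rest \<noteq> []" using ar P(4) a xy by auto
  define U where "U = butlast rest"
  have "rest = butlast rest @ [last rest]" using restn by simp
  moreover have "last rest = y" using ar P(4) restn by simp
  ultimately have Pf: "P = x # U @ [y]" unfolding U_def using ar a by simp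
  have Un: "U \<noteq> []"
  proof
    assume "U = []"
    then have "P = [x, y]" using Pf by simp
    then have "{x, y} \<in> ?F" using P(1) by simp
    then show False using xC yC by simp
  qed
  have pE: "walk E P" using walk_mono[OF P(1)] by auto
  have sPV: "set P \<subseteq> V" using P(5) sW P1(1) P2(1) by (auto simp: is_path_def)
  have isP: "is_path V E (x # U @ [y])" using pE P(2) sPV Pf by (simp add: is_path_walk)
  have UC: "set U \<inter> set C = {}"
  proof -
    have "set U \<subseteq> set P - {x, y}" using P(2) Pf by auto
    then show ?thesis using P(5) sW P1(4) P2(4) by blast
  qed
  have "\<forall>z\<in>set U. reach v z"
  proof
    fix z assume z: "z \<in> set U"
    then have zc: "z \<notin> set C" using UC by auto
    have "z \<in> set P1 \<or> z \<in> set P2" using z Pf P(5) sW by auto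
    then show "reach v z" using reach_on_path[OF P1 _ zc] reach_on_path[OF P2 _ zc] by blast
  qed
  then show ?thesis using Un isP UC by blast
qed

end




lemma sucmod: "p < n \<Longrightarrow> Suc p mod n = (if Suc p = n then 0 else Suc p)"
  by auto

lemma no_tri:
  assumes "5 \<le> n" "i < n" "j < n" "k < n" "i \<noteq> j" "i \<noteq> k" "j \<noteq> k"
    "j = Suc i mod n \<or> i = Suc j mod n" "k = Suc i mod n \<or> i = Suc k mod n" "k = Suc j mod n \<or> j = Suc k mod n"
  shows False
  using assms unfolding sucmod[OF assms(2)] sucmod[OF assms(3)] sucmod[OF assms(4)]
  by (auto split: if_splits)

context setting begin

lemma touch_pair:
  assumes tc: "two_connected V E" and v: "v \<in> V" "v \<notin> set C"
  shows "\<exists>a<length C. touch_set V E C v = {C ! a, C ! (Suc a mod length C)} \<and>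
    (\<exists>U. U \<noteq> [] \<and> odd (length U) \<and> is_path V E (C ! a # U @ [C ! (Suc a mod length C)]) \<and>
         set U \<inter> set C = {} \<and> (\<forall>z\<in>set U. reach v z))"
proof -
  let ?n = "length C"
  obtain x y where xy: "x \<noteq> y" "touches V E C v x" "touches V E C v y" using T_two[OF tc v] by blast
  obtain i where i: "i < ?n" "x = C ! i" using touches_in[OF xy(2)] by (metis in_set_conv_nth)
  obtain j where j: "j < ?n" "y = C ! j" using touches_in[OF xy(3)] by (metis in_set_conv_nth)
  have ij: "i \<noteq> j" using xy i j by auto
  obtain U where U: "U \<noteq> []" "is_path V E (x # U @ [y])" "set U \<inter> set C = {}" "\<forall>z\<in>set U. reach v z"
    using T_ear[OF v xy(2,3,1)] by blast
  have e: "odd (length U)" "j = Suc i mod ?n \<or> i = Suc j mod ?n" using ear[OF i(1) j(1) ij U(1) _ U(3)] U(2) i j by auto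
  have T: "touch_set V E C v = {x, y}"
  proof
    show "{x, y} \<subseteq> touch_set V E C v" using xy touches_in unfolding touch_set_def by auto
    show "touch_set V E C v \<subseteq> {x, y}"
    proof
      fix z assume z: "z \<in> touch_set V E C v"
      then have tz: "touches V E C v z" by (simp add: touch_set_def)
      obtain k where k: "k < ?n" "z = C ! k" using touches_in[OF tz] by (metis in_set_conv_nth)
      show "z \<in> {x, y}"
      proof (rule ccontr)
        assume "z \<notin> {x, y}"
        then have zx: "x \<noteq> z" "y \<noteq> z" and ik: "i \<noteq> k" and jk: "j \<noteq> k" using i j k by auto
        obtain U1 where U1: "U1 \<noteq> []" "is_path V E (x # U1 @ [z])" "set U1 \<inter> set C = {}"
          using T_ear[OF v xy(2) tz zx(1)] by blast
        obtain U2 where U2: "U2 \<noteq> []" "is_path V E (y # U2 @ [z])" "set U2 \<inter> set C = {}"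
          using T_ear[OF v xy(3) tz zx(2)] by blast
        have "k = Suc i mod ?n \<or> i = Suc k mod ?n" using ear[OF i(1) k(1) ik U1(1) _ U1(3)] U1(2) i k by auto
        moreover have "k = Suc j mod ?n \<or> j = Suc k mod ?n" using ear[OF j(1) k(1) jk U2(1) _ U2(3)] U2(2) j k by auto
        ultimately show False using no_tri[OF n5 i(1) j(1) k(1) ij ik jk e(2)] by blast
      qed
    qed
  qed
  show ?thesis
  proof (cases "j = Suc i mod ?n")
    case True
    then show ?thesis using i j T U e by blast
  next
    case False
    then have ji: "i = Suc j mod ?n" using e by simp
    have "is_path V E (y # rev U @ [x])" using path_rev[OF U(2)] by simp
    moreover have "touch_set V E C v = {C ! j, C ! (Suc j mod ?n)}" using T i j ji by auto
    ultimately show ?thesis using j i ji U e by (intro exI[of _ j]) (auto intro!: exI[of _ "rev U"])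
  qed
qed

lemma ear_parts: "U \<noteq> [] \<Longrightarrow> is_path V E (x # U @ [y]) \<Longrightarrow>
  walk E U \<and> {x, hd U} \<in> E \<and> {last U, y} \<in> E \<and> distinct U \<and> set U \<subseteq> V"
  using walk_app[of "[x]" "U @ [y]" E] walk_app[of U "[y]" E] by (auto simp: is_path_walk)

lemma final:
  assumes tc: "two_connected V E" and v: "v \<in> V" "v \<notin> set C" and w: "w \<in> V" "w \<notin> set C"
  shows "touch_set V E C v = touch_set V E C w"
proof (rule ccontr)
  assume ne: "touch_set V E C v \<noteq> touch_set V E C w"
  let ?n = "length C"
  obtain a Uv where a: "a < ?n" "touch_set V E C v = {C ! a, C ! (Suc a mod ?n)}"
    and Uv: "Uv \<noteq> []" "odd (length Uv)" "is_path V E (C ! a # Uv @ [C ! (Suc a mod ?n)])"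
      "set Uv \<inter> set C = {}" "\<forall>z\<in>set Uv. reach v z"
    using touch_pair[OF tc v] by blast
  obtain b Uw where b: "b < ?n" "touch_set V E C w = {C ! b, C ! (Suc b mod ?n)}"
    and Uw: "Uw \<noteq> []" "odd (length Uw)" "is_path V E (C ! b # Uw @ [C ! (Suc b mod ?n)])"
      "set Uw \<inter> set C = {}" "\<forall>z\<in>set Uw. reach w z"
    using touch_pair[OF tc w] by blast
  have ab: "a \<noteq> b" using a b ne by auto
  have dj: "set Uv \<inter> set Uw = {}"
  proof (rule ccontr)
    assume "set Uv \<inter> set Uw \<noteq> {}"
    then obtain z where "z \<in> set Uv" "z \<in> set Uw" by auto
    then have "reach v z" "reach w z" using Uv Uw by auto
    then show False using reach_T ne by metis
  qed
  have pv: "walk E Uv" "{C ! a, hd Uv} \<in> E" "{last Uv, C ! (Suc a mod ?n)} \<in> E" "distinct Uv" "set Uv \<subseteq> V"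
    using ear_parts[OF Uv(1,3)] by auto
  have pw: "walk E Uw" "{C ! b, hd Uw} \<in> E" "{last Uw, C ! (Suc b mod ?n)} \<in> E" "distinct Uw" "set Uw \<subseteq> V"
    using ear_parts[OF Uw(1,3)] by auto
  define A where "A = arc C (Suc a) (?n - 1)"
  have n0: "0 < ?n" using n5 by (cases C) auto
  have lA: "length A = ?n" unfolding A_def using n0 by simp
  have dA: "distinct A" unfolding A_def using arc_distinct[OF Ccyc, of "?n - 1"] n0 by simp
  have sA: "set A \<subseteq> set C" unfolding A_def using arc_set[of C] n0 by auto
  have wA: "walk E A" unfolding A_def using arc_walk[OF Ccyc] .
  have hA: "hd A = C ! (Suc a mod ?n)" unfolding A_def by (simp add: arc_hd)
  have "Suc a + (?n - 1) = a + ?n" using n0 by simp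
  then have lastA: "last A = C ! a" unfolding A_def using a(1) by (simp add: arc_last)
  obtain d where d: "Suc d < ?n" "(Suc a + d) mod ?n = b"
  proof (cases "a < b")
    case True
    show ?thesis by (rule that[of "b - Suc a"]) (use True b(1) in auto)
  next
    case False
    then have "b < a" using ab by simp
    show ?thesis
    proof (rule that[of "?n + b - Suc a"])
      have "Suc a + (?n + b - Suc a) = ?n + b" using a(1) by simp
      then show "(Suc a + (?n + b - Suc a)) mod ?n = b" using b(1) by (simp del: add_Suc add_Suc_right)
    qed (use \<open>b < a\<close> a(1) in auto)
  qed
  have Ad: "A ! d = C ! b" unfolding A_def using d by (simp add: arc_nth)
  have "A ! Suc d = C ! (Suc (Suc a + d) mod ?n)" unfolding A_def using d by (simp add: arc_nth)
  also have "\<dots> = C ! (Suc b mod ?n)" using d(2) by (metis mod_Suc_eq)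
  finally have ASd: "A ! Suc d = C ! (Suc b mod ?n)" .
  define T1 where "T1 = take (Suc d) A"
  define T2 where "T2 = drop (Suc d) A"
  have T12: "T1 @ T2 = A" unfolding T1_def T2_def by simp
  have T1n: "T1 \<noteq> []" "T2 \<noteq> []" unfolding T1_def T2_def using d lA by auto
  have lT1: "last T1 = C ! b" unfolding T1_def using d lA Ad by (simp add: take_Suc_conv_app_nth)
  have hT1: "hd T1 = C ! (Suc a mod ?n)" unfolding T1_def using hA lA d by (simp add: hd_conv_nth)
  have hT2: "hd T2 = C ! (Suc b mod ?n)" unfolding T2_def using ASd lA d by (simp add: hd_drop_conv_nth)
  have lT2: "last T2 = C ! a" unfolding T2_def using lastA lA d by simp
  have wT: "walk E T1" "walk E T2" unfolding T1_def T2_def using walk_take[OF wA] walk_drop[OF wA] lA d by auto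
  have "distinct (T1 @ T2)" using dA T12 by simp
  then have dT: "distinct T1" "distinct T2" "set T1 \<inter> set T2 = {}" by auto
  have "set T1 \<union> set T2 = set A" using arg_cong[OF T12, of set] by simp
  then have sT: "set T1 \<subseteq> set C" "set T2 \<subseteq> set C" using sA by auto
  define L where "L = T1 @ Uw @ T2 @ Uv"
  have w3: "walk E (T2 @ Uv)" using walk_app[of T2 Uv E] T1n Uv(1) wT pv lT2 by simp
  have w2: "walk E (Uw @ T2 @ Uv)" using walk_app[of Uw "T2 @ Uv" E] T1n Uw(1) w3 pw hT2 by simp
  have wL: "walk E L" unfolding L_def using walk_app[of T1 "Uw @ T2 @ Uv" E] T1n Uw(1) w2 wT pw lT1 by simp
  have cl: "{last L, hd L} \<in> E" unfolding L_def using Uv(1) T1n hT1 pv by simp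
  have dL: "distinct L" unfolding L_def using dT pv pw dj sT Uv(4) Uw(4) by auto
  have sL: "set L \<subseteq> V" unfolding L_def using sT CV pv pw by auto
  have "length T1 + length T2 = ?n" using arg_cong[OF T12, of length] lA by simp
  then have lenL: "length L = ?n + length Uw + length Uv" unfolding L_def by simp
  have "is_odd_cycle V E L" unfolding is_odd_cycle_def
    using cycle_intro[OF wL cl dL _ sL] lenL n5 Codd Uv(2) Uw(2) by simp
  then have "length L \<le> ?n" using longest by (simp add: longest_odd_cycle_def)
  then show False using lenL Uw(1) by simp
qed

end

theorem mainTheorem7:
  fixes V :: "'a set" and E :: "'a set set" and C :: "'a list"
  assumes "in_Gstar V E"
    and "two_connected V E"
    and "longest_odd_cycle V E C"
    and "5 \<le> length C"
    and "V - set C \<noteq> {}"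
  shows "\<forall>v \<in> V - set C. \<forall>w \<in> V - set C. touch_set V E C v = touch_set V E C w"
proof -
  interpret setting V E C using assms by unfold_locales
  show ?thesis using final[OF assms(2)] by blast
qed



end
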